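(* Every group containing the free group $F_2$ has weak paradoxical towers.
   Context: For $n\in\mathbb N$, a group $G$ has weak $n$-paradoxical towers if for every $m\in\mathbb N$ there exist a finite subset $D\subseteq G$ with $|D|\ge m$, subsets $K_1,\dots,K_n\subseteq G$ and elements $g_1,\dots,g_n\in G$ such that for each $j$ the sets $\{dK_j\}_{d\in D}$ are pairwise disjoint, and $\bigcup_{j=1}^n g_jK_j=G$. $G$ has weak paradoxical towers if it has weak $n$-paradoxical towers for some $n$. *)

theory Defs
  imports "HOL-Algebra.Group" "HOL-Algebra.Coset"
begin

text \<open>Letters are pairs (generator, inverted?): the generator is a boolean
  (False = a, True = b) and the second component says whether the letter is
  the inverse of the generator.\<close>

type_synonym letter2 = "bool \<times> bool"

definition inverse_letters :: "letter2 \<Rightarrow> letter2 \<Rightarrow> bool" where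
  "inverse_letters x y \<longleftrightarrow> fst x = fst y \<and> snd x \<noteq> snd y"

fun reduced :: "letter2 list \<Rightarrow> bool" where
  "reduced [] = True"
| "reduced [x] = True"
| "reduced (x # y # ys) = (\<not> inverse_letters x y \<and> reduced (y # ys))"

definition red_cons :: "letter2 \<Rightarrow> letter2 list \<Rightarrow> letter2 list" where
  "red_cons x ys = (case ys of [] \<Rightarrow> [x]
     | y # ys' \<Rightarrow> (if inverse_letters x y then ys' else x # ys))"

definition reduce :: "letter2 list \<Rightarrow> letter2 list" where
  "reduce xs = foldr red_cons xs []"

definition free_group2 :: "letter2 list monoid" where
  "free_group2 = \<lparr> carrier = {w. reduced w}, mult = (\<lambda>x y. reduce (x @ y)), one = [] \<rparr>"

definition contains_F2 :: "('a, 'b) monoid_scheme \<Rightarrow> bool" where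
  "contains_F2 G \<longleftrightarrow> (\<exists>h. h \<in> hom free_group2 G \<and> inj_on h (carrier free_group2))"

definition weak_n_paradoxical_towers :: "('a, 'b) monoid_scheme \<Rightarrow> nat \<Rightarrow> bool" where
  "weak_n_paradoxical_towers G n \<longleftrightarrow>
    (\<forall>m::nat. \<exists>(D::'a set) (K::nat \<Rightarrow> 'a set) (g::nat \<Rightarrow> 'a).
       finite D \<and> D \<subseteq> carrier G \<and> card D \<ge> m \<and>
       (\<forall>j\<in>{1..n}. K j \<subseteq> carrier G \<and> g j \<in> carrier G) \<and>
       (\<forall>j\<in>{1..n}. \<forall>d\<in>D. \<forall>d'\<in>D. d \<noteq> d' \<longrightarrow>
            (d <#\<^bsub>G\<^esub> K j) \<inter> (d' <#\<^bsub>G\<^esub> K j) = {}) \<and>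
       (\<Union>j\<in>{1..n}. g j <#\<^bsub>G\<^esub> K j) = carrier G)"

definition weak_paradoxical_towers :: "('a, 'b) monoid_scheme \<Rightarrow> bool" where
  "weak_paradoxical_towers G \<longleftrightarrow> (\<exists>n::nat. weak_n_paradoxical_towers G n)"

end

theory Submission
  imports Defs
begin

lemma reduced_tl: "reduced (x # xs) \<Longrightarrow> reduced xs"
  by (cases xs) auto

lemma reduced_red_cons: "reduced ys \<Longrightarrow> reduced (red_cons x ys)"
  unfolding red_cons_def
  by (cases ys) (auto dest: reduced_tl)

lemma reduced_reduce: "reduced (reduce xs)"
  unfolding reduce_def by (induction xs) (auto intro: reduced_red_cons)

lemma reduce_reduced: "reduced xs \<Longrightarrow> reduce xs = xs"
proof (induction xs)
  case Nil then show ?case by (simp add: reduce_def)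
next
  case (Cons x xs)
  then have "reduce xs = xs" using reduced_tl by blast
  then show ?case using Cons.prems
    by (cases xs) (auto simp: reduce_def red_cons_def)
qed

lemma reduce_append: "reduce (xs @ ys) = foldr red_cons xs (reduce ys)"
  unfolding reduce_def by simp

definition inv_letter :: "letter2 \<Rightarrow> letter2" where
  "inv_letter c = (fst c, \<not> snd c)"

definition winv :: "letter2 list \<Rightarrow> letter2 list" where
  "winv xs = rev (map inv_letter xs)"

lemma red_cons_cancel:
  assumes "reduced ys" shows "red_cons c (red_cons (inv_letter c) ys) = ys"
proof (cases ys)
  case Nil then show ?thesis
    by (auto simp: red_cons_def inv_letter_def inverse_letters_def)
next
  case (Cons y ys')
  show ?thesis
  proof (cases "inverse_letters (inv_letter c) y")
    case True
    then have yc: "y = c" by (cases c, cases y) (auto simp: inv_letter_def inverse_letters_def)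
    show ?thesis
    proof (cases ys')
      case Nil then show ?thesis using Cons True yc by (simp add: red_cons_def)
    next
      case (Cons z zs)
      then show ?thesis using \<open>ys = y # ys'\<close> True yc assms by (simp add: red_cons_def)
    qed
  next
    case False
    then show ?thesis using Cons
      by (cases c) (auto simp: red_cons_def inv_letter_def inverse_letters_def)
  qed
qed

lemma foldr_winv: "reduced ys \<Longrightarrow> foldr red_cons x (foldr red_cons (winv x) ys) = ys"
proof (induction x arbitrary: ys)
  case Nil then show ?case by (simp add: winv_def)
next
  case (Cons c x)
  have "foldr red_cons (winv (c # x)) ys = foldr red_cons (winv x) (red_cons (inv_letter c) ys)"
    by (simp add: winv_def)
  then show ?case using Cons reduced_red_cons red_cons_cancel by simp
qed

lemma reduce_winv: "reduced x \<Longrightarrow> reduce (x @ reduce (winv x)) = []"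
  by (simp add: reduce_append reduce_reduced reduced_reduce) (simp add: reduce_def foldr_winv)

abbreviation bb :: letter2 where "bb \<equiv> (True, False)"

lemma reduced_rep: "reduced ((False, c) # r) \<Longrightarrow> reduced (replicate i bb @ (False, c) # r)"
proof (induction i)
  case 0 then show ?case by simp
next
  case (Suc i)
  then show ?case by (cases i) (auto simp: inverse_letters_def)
qed

lemma rep_eq: "replicate i bb @ (False, c) # r = replicate j bb @ (False, c') # r' \<Longrightarrow> i = j"
proof (induction i arbitrary: j)
  case 0 then show ?case by (cases j) auto
next
  case (Suc i) then show ?case by (cases j) auto
qed


lemma lift:
  fixes G :: "('a, 'b) monoid_scheme" (structure)
  assumes G: "group G" and H: "subgroup H G"
    and hyp: "\<And>m. \<exists>(D::'a set) (K::nat \<Rightarrow> 'a set) (g::nat \<Rightarrow> 'a).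
       finite D \<and> D \<subseteq> H \<and> card D \<ge> m \<and>
       (\<forall>j\<in>{1..n}. K j \<subseteq> H \<and> g j \<in> H) \<and>
       (\<forall>j\<in>{1..n}. \<forall>d\<in>D. \<forall>d'\<in>D. d \<noteq> d' \<longrightarrow>
            (d <#\<^bsub>G\<^esub> K j) \<inter> (d' <#\<^bsub>G\<^esub> K j) = {}) \<and>
       (\<Union>j\<in>{1..n}. g j <#\<^bsub>G\<^esub> K j) = H"
  shows "weak_n_paradoxical_towers G n"
proof -
  interpret group G by (rule G)
  have Hc: "H \<subseteq> carrier G" using H subgroup.subset by blast
  define rep where "rep x = (SOME y. y \<in> H #> x)" for x
  define T where "T = rep ` carrier G"
  have rep1: "rep x \<in> H #> x" if "x \<in> carrier G" for x
    unfolding rep_def using rcos_self[OF that H] by (rule someI)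
  have repc: "rep x \<in> carrier G" if "x \<in> carrier G" for x
    using rep1[OF that] that Hc unfolding r_coset_def by auto
  have decomp: "\<exists>\<eta>\<in>H. x = \<eta> \<otimes> rep x" if x: "x \<in> carrier G" for x
  proof -
    have "H #> x = H #> rep x" using repr_independence[OF rep1[OF x] x H] .
    then have "x \<in> H #> rep x" using rcos_self[OF x H] by simp
    then show ?thesis unfolding r_coset_def by auto
  qed
  have uniq: "t = t' \<and> \<eta> = \<eta>'" if tT: "t \<in> T" "t' \<in> T" and "\<eta> \<in> H" "\<eta>' \<in> H"
    "\<eta> \<otimes> t = \<eta>' \<otimes> t'" for t t' \<eta> \<eta>'
  proof -
    obtain x x' where x: "x \<in> carrier G" "t = rep x" and x': "x' \<in> carrier G" "t' = rep x'"
      using tT unfolding T_def by blast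
    have tc: "t \<in> carrier G" "t' \<in> carrier G" using x x' repc by auto
    have e1: "H #> x = H #> t" using repr_independence[OF rep1[OF x(1)] x(1) H] x by simp
    have e2: "H #> x' = H #> t'" using repr_independence[OF rep1[OF x'(1)] x'(1) H] x' by simp
    have z1: "\<eta> \<otimes> t \<in> H #> t" using that unfolding r_coset_def by blast
    have z2: "\<eta> \<otimes> t \<in> H #> t'" using that unfolding r_coset_def by (simp, blast)
    have "H #> t = H #> (\<eta> \<otimes> t)" using repr_independence[OF z1 tc(1) H] .
    also have "\<dots> = H #> t'" using repr_independence[OF z2 tc(2) H] by simp
    finally have "H #> x = H #> x'" using e1 e2 by simp
    then have tt: "t = t'" using x x' unfolding rep_def by simp
    moreover have "\<eta> = \<eta>'" using that tt tc Hc using right_cancel by (metis in_mono)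
    ultimately show ?thesis by simp
  qed
  have Tc: "T \<subseteq> carrier G" using repc T_def by auto
  show ?thesis
    unfolding weak_n_paradoxical_towers_def
  proof
    fix m
    obtain D K g where D: "finite D" "D \<subseteq> H" "card D \<ge> m"
      and Kg: "\<forall>j\<in>{1..n}. K j \<subseteq> H \<and> g j \<in> H"
      and dis: "\<forall>j\<in>{1..n}. \<forall>d\<in>D. \<forall>d'\<in>D. d \<noteq> d' \<longrightarrow>
            (d <# K j) \<inter> (d' <# K j) = {}"
      and cov: "(\<Union>j\<in>{1..n}. g j <# K j) = H"
      using hyp[of m] by blast
    define K' where "K' j = (\<Union>k\<in>K j. \<Union>t\<in>T. {k \<otimes> t})" for j
    have "D \<subseteq> carrier G" using D Hc by auto
    moreover have "\<forall>j\<in>{1..n}. K' j \<subseteq> carrier G \<and> g j \<in> carrier G"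
      using Kg Hc Tc unfolding K'_def by blast
    moreover have "\<forall>j\<in>{1..n}. \<forall>d\<in>D. \<forall>d'\<in>D. d \<noteq> d' \<longrightarrow>
            (d <# K' j) \<inter> (d' <# K' j) = {}"
    proof (intro ballI impI)
      fix j d d' assume j: "j \<in> {1..n}" and d: "d \<in> D" "d' \<in> D" "d \<noteq> d'"
      show "(d <# K' j) \<inter> (d' <# K' j) = {}"
      proof (rule ccontr)
        assume "(d <# K' j) \<inter> (d' <# K' j) \<noteq> {}"
        then obtain k t k' t' where kt: "k \<in> K j" "t \<in> T" "k' \<in> K j" "t' \<in> T"
          and eq: "d \<otimes> (k \<otimes> t) = d' \<otimes> (k' \<otimes> t')"
          unfolding l_coset_def K'_def by blast
        have c: "d \<in> H" "d' \<in> H" "k \<in> H" "k' \<in> H" using d D kt Kg j by auto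
        have tc: "t \<in> carrier G" "t' \<in> carrier G" using kt Tc by auto
        have "(d \<otimes> k) \<otimes> t = (d' \<otimes> k') \<otimes> t'" using eq c tc Hc by (simp add: m_assoc subsetD)
        moreover have "d \<otimes> k \<in> H" "d' \<otimes> k' \<in> H" using c by (simp_all add: subgroup.m_closed[OF H])
        ultimately have "d \<otimes> k = d' \<otimes> k'" using uniq kt by blast
        then have "d \<otimes> k \<in> (d <# K j) \<inter> (d' <# K j)" using kt unfolding l_coset_def by blast
        then show False using dis j d by blast
      qed
    qed
    moreover have "(\<Union>j\<in>{1..n}. g j <# K' j) = carrier G"
    proof
      show "(\<Union>j\<in>{1..n}. g j <# K' j) \<subseteq> carrier G"
        using Kg Hc Tc unfolding K'_def l_coset_def by blast
    next
      show "carrier G \<subseteq> (\<Union>j\<in>{1..n}. g j <# K' j)"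
      proof
        fix x assume x: "x \<in> carrier G"
        obtain \<eta> where eta: "\<eta> \<in> H" "x = \<eta> \<otimes> rep x" using decomp[OF x] by blast
        then obtain j k where jk: "j \<in> {1..n}" "k \<in> K j" "\<eta> = g j \<otimes> k"
          using cov unfolding l_coset_def by blast
        have kh: "K j \<subseteq> H \<and> g j \<in> H" using Kg jk(1) by blast
        have kc: "k \<in> carrier G" "g j \<in> carrier G" using kh jk(2) Hc by blast+
        have "x = g j \<otimes> (k \<otimes> rep x)" using eta jk kc repc[OF x] by (simp add: m_assoc)
        moreover have "k \<otimes> rep x \<in> K' j" using jk x unfolding K'_def T_def by blast
        ultimately show "x \<in> (\<Union>j\<in>{1..n}. g j <# K' j)" using jk unfolding l_coset_def by blast
      qed
    qed
    ultimately show "\<exists>D K g. finite D \<and> D \<subseteq> carrier G \<and> m \<le> card D \<and>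
           (\<forall>j\<in>{1..n}. K j \<subseteq> carrier G \<and> g j \<in> carrier G) \<and>
           (\<forall>j\<in>{1..n}. \<forall>d\<in>D. \<forall>d'\<in>D. d \<noteq> d' \<longrightarrow> (d <# K j) \<inter> (d' <# K j) = {}) \<and>
           (\<Union>j\<in>{1..n}. g j <# K j) = carrier G"
      using D by blast
  qed
qed


lemma reduced_replicate: "reduced (replicate i bb)"
proof (induction i)
  case (Suc i) then show ?case by (cases i) (auto simp: inverse_letters_def)
qed simp

definition Wc :: "bool \<Rightarrow> letter2 list set" where
  "Wc c = {w. reduced w \<and> (\<exists>r. w = (False, c) # r)}"

lemma F2_towers:
  fixes G :: "('a, 'b) monoid_scheme" (structure)
  assumes G: "group G" and hh: "h \<in> hom free_group2 G" and inj: "inj_on h (carrier free_group2)"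
  shows "weak_n_paradoxical_towers G 2"
proof -
  interpret group G by (rule G)
  have carF: "carrier free_group2 = {w. reduced w}" by (simp add: free_group2_def)
  have hc: "h x \<in> carrier G" if "reduced x" for x
    using hom_in_carrier[OF hh] that carF by auto
  have hm: "h (reduce (x @ y)) = h x \<otimes> h y" if "reduced x" "reduced y" for x y
    using hom_mult[OF hh, of x y] that by (simp add: free_group2_def)
  have hinj: "x = y" if "reduced x" "reduced y" "h x = h y" for x y
    using inj that carF unfolding inj_on_def by auto
  have h1: "h [] = \<one>"
  proof -
    have "h [] = h [] \<otimes> h []" using hm[of "[]" "[]"] by (simp add: reduce_def)
    then show ?thesis using hc[of "[]"] by simp
  qed
  define H where "H = h ` {w. reduced w}"
  have Hc: "H \<subseteq> carrier G" using hc H_def by auto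
  have subH: "subgroup H G"
  proof (rule subgroupI)
    show "H \<subseteq> carrier G" by (rule Hc)
    show "H \<noteq> {}" unfolding H_def by (auto intro: exI[of _ "[]"])
  next
    fix a assume "a \<in> H"
    then obtain x where x: "reduced x" "a = h x" unfolding H_def by auto
    define y where "y = reduce (winv x)"
    have y: "reduced y" using reduced_reduce y_def by simp
    have "h x \<otimes> h y = \<one>" using hm[OF x(1) y] reduce_winv[OF x(1)] h1 y_def by simp
    then have "h y = inv (h x)" using hc[OF x(1)] hc[OF y]
      by (metis m_assoc l_inv l_one r_one inv_closed)
    then show "inv a \<in> H" using x y H_def by (metis image_eqI mem_Collect_eq)
  next
    fix a b assume "a \<in> H" "b \<in> H"
    then obtain x y where "reduced x" "a = h x" "reduced y" "b = h y" unfolding H_def by auto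
    then show "a \<otimes> b \<in> H" using hm[of x y] reduced_reduce H_def by (metis image_eqI mem_Collect_eq)
  qed
  have Wsub: "h ` Wc c \<subseteq> H" for c unfolding Wc_def H_def by auto
  have dis: "(h (replicate i bb) <# h ` Wc c) \<inter> (h (replicate i' bb) <# h ` Wc c) = {}"
    if "i \<noteq> i'" for i i' c
  proof (rule ccontr)
    assume "(h (replicate i bb) <# h ` Wc c) \<inter> (h (replicate i' bb) <# h ` Wc c) \<noteq> {}"
    then obtain w w' where w: "w \<in> Wc c" "w' \<in> Wc c"
      and eq: "h (replicate i bb) \<otimes> h w = h (replicate i' bb) \<otimes> h w'"
      unfolding l_coset_def by blast
    obtain r r' where r: "w = (False, c) # r" "w' = (False, c) # r'" "reduced w" "reduced w'"
      using w unfolding Wc_def by auto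
    have red1: "reduced (replicate i bb @ w)" "reduced (replicate i' bb @ w')"
      using reduced_rep r by auto
    have "h (replicate i bb @ w) = h (replicate i' bb @ w')"
      using eq hm[OF reduced_replicate r(3), of i] hm[OF reduced_replicate r(4), of i']
        reduce_reduced[OF red1(1)] reduce_reduced[OF red1(2)] by simp
    then have "replicate i bb @ w = replicate i' bb @ w'" using hinj red1 by blast
    then have "i = i'" using r rep_eq by metis
    then show False using that by simp
  qed
  show ?thesis
  proof (rule lift[OF G subH])
    fix m :: nat
    define D where "D = (\<lambda>i. h (replicate i bb)) ` {..<m}"
    define K where "K j = (if j = (1::nat) then h ` Wc False else h ` Wc True)" for j
    define g where "g j = (if j = (1::nat) then \<one> else h [(False, False)])" for j
    have injD: "inj_on (\<lambda>i. h (replicate i bb)) {..<m}"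
    proof (rule inj_onI)
      fix i j assume "h (replicate i bb) = h (replicate j bb)"
      then have "replicate i bb = (replicate j bb :: letter2 list)"
        using hinj reduced_replicate by blast
      then show "i = j" by (metis length_replicate)
    qed
    have cardD: "card D = m" unfolding D_def using card_image[OF injD] by simp
    have DH: "D \<subseteq> H" unfolding D_def H_def using reduced_replicate by auto
    have A: "h [(False, False)] \<in> H" unfolding H_def by auto
    have KgH: "\<forall>j\<in>{1..2}. K j \<subseteq> H \<and> g j \<in> H"
      using Wsub A subgroup.one_closed[OF subH] unfolding K_def g_def by auto
    have disD: "\<forall>j\<in>{1..2}. \<forall>d\<in>D. \<forall>d'\<in>D. d \<noteq> d' \<longrightarrow> (d <# K j) \<inter> (d' <# K j) = {}"
    proof (intro ballI impI)
      fix j d d' assume "j \<in> {1..2::nat}" "d \<in> D" "d' \<in> D" "d \<noteq> d'"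
      then obtain i i' where "d = h (replicate i bb)" "d' = h (replicate i' bb)" "i \<noteq> i'"
        unfolding D_def by auto
      then show "(d <# K j) \<inter> (d' <# K j) = {}" using dis unfolding K_def by simp
    qed
    have cov: "(\<Union>j\<in>{1..2}. g j <# K j) = H"
    proof -
      have e: "{1..2::nat} = {1, 2}" by auto
      have "(\<Union>j\<in>{1..2}. g j <# K j) = (\<one> <# h ` Wc False) \<union> (h [(False, False)] <# h ` Wc True)"
        unfolding e K_def g_def by simp
      also have "\<dots> = H"
      proof
        show "(\<one> <# h ` Wc False) \<union> (h [(False, False)] <# h ` Wc True) \<subseteq> H"
        proof
          fix z assume "z \<in> (\<one> <# h ` Wc False) \<union> (h [(False, False)] <# h ` Wc True)"
          then consider w where "w \<in> Wc False" "z = \<one> \<otimes> h w"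
            | w where "w \<in> Wc True" "z = h [(False, False)] \<otimes> h w"
            unfolding l_coset_def by blast
          then show "z \<in> H"
          proof cases
            case 1 then show ?thesis using hc unfolding Wc_def H_def by auto
          next
            case 2
            then have "reduced w" unfolding Wc_def by auto
            then have "z = h (reduce ([(False, False)] @ w))" using 2 hm[of "[(False, False)]" w] by simp
            then show ?thesis using reduced_reduce H_def by auto
          qed
        qed
      next
        show "H \<subseteq> (\<one> <# h ` Wc False) \<union> (h [(False, False)] <# h ` Wc True)"
        proof
          fix z assume "z \<in> H"
          then obtain v where v: "reduced v" "z = h v" unfolding H_def by auto
          show "z \<in> (\<one> <# h ` Wc False) \<union> (h [(False, False)] <# h ` Wc True)"
          proof (cases "\<exists>r. v = (False, False) # r")
            case True
            then have "v \<in> Wc False" using v unfolding Wc_def by auto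
            moreover have "z = \<one> \<otimes> h v" using v hc by simp
            ultimately show ?thesis unfolding l_coset_def by blast
          next
            case False
            define w where "w = (False, True) # v"
            have rw: "reduced w" unfolding w_def using v False
              by (cases v) (auto simp: inverse_letters_def)
            have "w \<in> Wc True" using rw unfolding w_def Wc_def by auto
            moreover have "reduce ([(False, False)] @ w) = v"
            proof -
              have "reduce w = w" using reduce_reduced[OF rw] .
              then have "reduce ([(False, False)] @ w) = red_cons (False, False) w"
                by (simp add: reduce_def)
              then show ?thesis unfolding w_def by (simp add: red_cons_def inverse_letters_def)
            qed
            then have "z = h [(False, False)] \<otimes> h w" using hm[of "[(False, False)]" w] rw v by simp
            ultimately show ?thesis unfolding l_coset_def by blast
          qed
        qed
      qed
      finally show ?thesis .
    qed
    show "\<exists>(D::'a set) (K::nat \<Rightarrow> 'a set) (g::nat \<Rightarrow> 'a).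
       finite D \<and> D \<subseteq> H \<and> card D \<ge> m \<and>
       (\<forall>j\<in>{1..2}. K j \<subseteq> H \<and> g j \<in> H) \<and>
       (\<forall>j\<in>{1..2}. \<forall>d\<in>D. \<forall>d'\<in>D. d \<noteq> d' \<longrightarrow>
            (d <#\<^bsub>G\<^esub> K j) \<inter> (d' <#\<^bsub>G\<^esub> K j) = {}) \<and>
       (\<Union>j\<in>{1..2}. g j <#\<^bsub>G\<^esub> K j) = H"
      apply (rule exI[of _ D], rule exI[of _ K], rule exI[of _ g])
      using cardD DH KgH disD cov unfolding D_def by simp
  qed
qed

theorem corollary3p13:
  assumes "group G" and "contains_F2 G"
  shows "weak_paradoxical_towers G"
  using assms F2_towers unfolding contains_F2_def weak_paradoxical_towers_def by blast

end
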